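(* Let $g,h\in\mathbb F_q[x,y]$ be nonzero with $(x^l-1)(y^m-1)=g(x,y)h(x,y)$ in $\mathbb F_q[x,y]$, and let $C=\langle g\rangle$, $C^*=\langle h^*\rangle$ be the ideals of $\mathfrak R$ generated by the images of $g$ and $h^*$. Assume $C\neq\{0\}$ and $C^*\ne\{0\}$. Then $C\subseteq C^*$ if and only if $(x^l-1)(y^m-1)$ divides $g(x,y)g^*(x,y)$ in $\mathbb F_q[x,y]$.
   Context: $\mathfrak R=\mathbb F_q[x,y]/\langle x^l-1,y^m-1\rangle$. For nonzero $f\in\mathbb F_q[x,y]$ with $l_1=\deg_x f$, $l_2=\deg_y f$, the reciprocal polynomial is $f^*(x,y)=x^{l_1}y^{l_2}f(x^{-1},y^{-1})$. *)

theory Defs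
  imports "HOL-Computational_Algebra.Polynomial"
begin

text \<open>Bivariate polynomials F[x,y] are represented as 'a poly poly:
  the outer variable is y, the coefficients are polynomials in x.\<close>

type_synonym 'a bipoly = "'a poly poly"

definition varX :: "'a::comm_ring_1 bipoly" where
  "varX = [:[:0, 1:]:]"

definition varY :: "'a::comm_ring_1 bipoly" where
  "varY = [:0, 1:]"

definition deg_x :: "'a::zero bipoly \<Rightarrow> nat" where
  "deg_x f = Max ((\<lambda>j. degree (coeff f j)) ` {..degree f})"

definition deg_y :: "'a::zero bipoly \<Rightarrow> nat" where
  "deg_y f = degree f"

text \<open>Reciprocal f*(x,y) = x^{deg_x f} y^{deg_y f} f(1/x,1/y), written coefficientwise.\<close>
definition recip :: "'a::comm_ring_1 bipoly \<Rightarrow> 'a bipoly" where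
  "recip f = (\<Sum>j\<le>deg_y f. \<Sum>i\<le>deg_x f.
      monom (monom (coeff (coeff f j) i) (deg_x f - i)) (deg_y f - j))"

definition rel_ideal :: "nat \<Rightarrow> nat \<Rightarrow> 'a::comm_ring_1 bipoly set" where
  "rel_ideal l m = {a * (varX ^ l - 1) + b * (varY ^ m - 1) | a b. True}"

text \<open>Elements of R = F[x,y]/<x^l-1,y^m-1> as cosets; cls l m f is the image of f.\<close>
definition cls :: "nat \<Rightarrow> nat \<Rightarrow> 'a::comm_ring_1 bipoly \<Rightarrow> 'a bipoly set" where
  "cls l m f = {f + k | k. k \<in> rel_ideal l m}"

text \<open>The ideal of R generated by the image of f (R being commutative, it is {[a][f]} = {[a f]}).\<close>
definition gen_ideal_R :: "nat \<Rightarrow> nat \<Rightarrow> 'a::comm_ring_1 bipoly \<Rightarrow> 'a bipoly set set" where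
  "gen_ideal_R l m f = {cls l m (a * f) | a. True}"

end

theory Submission
  imports Defs "HOL-Computational_Algebra.Polynomial_Factorial"
begin

definition cy :: "'a::comm_ring_1 poly \<Rightarrow> 'a poly poly" where
  "cy p = map_poly (\<lambda>c. [:c:]) p"

lemma coeff_cy [simp]: "coeff (cy p) n = [:coeff p n:]"
  by (simp add: cy_def coeff_map_poly)

lemma const_sum: "[:sum f A:] = (\<Sum>x\<in>A. [:f x:])"
  using monom_sum[of f A 0] by (simp add: monom_0)

lemma cy_mult: "cy (p * q) = cy p * cy q"
  by (rule poly_eqI) (simp add: coeff_mult const_sum mult.commute)

lemma cy_add: "cy (p + q) = cy p + cy q"
  by (rule poly_eqI) simp

lemma cy_diff: "cy (p - q) = cy p - cy q"
  by (rule poly_eqI) simp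

lemma cy_uminus: "cy (- q) = - cy q"
  by (rule poly_eqI) simp

lemma cy_1: "cy 1 = 1"
  by (simp add: cy_def)

lemma cy_0 [simp]: "cy 0 = 0"
  by (simp add: cy_def)

lemma cy_monom: "cy (monom c n) = monom [:c:] n"
  by (simp add: cy_def map_poly_monom)

lemma cy_eq_0_iff [simp]: "cy p = 0 \<longleftrightarrow> p = 0"
  unfolding cy_def by (rule map_poly_eq_0_iff) auto

lemma degree_cy [simp]: "degree (cy p) = degree p"
  by (cases "p = 0") (simp_all add: cy_def map_poly_degree_eq)

lemma cy_smult: "cy (smult c p) = smult [:c:] (cy p)"
  by (rule poly_eqI) simp

definition phi :: "nat \<Rightarrow> nat \<Rightarrow> 'a::comm_ring_1 poly \<Rightarrow> 'a" where
  "phi n k p = (\<Sum>j\<le>degree p. if j mod n = k then coeff p j else 0)"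

lemma phi_bound:
  assumes "degree p < N"
  shows "phi n k p = (\<Sum>j<N. if j mod n = k then coeff p j else 0)"
  unfolding phi_def
proof (rule sum.mono_neutral_left)
  show "{..degree p} \<subseteq> {..<N}" using assms by auto
  show "\<forall>i\<in>{..<N} - {..degree p}. (if i mod n = k then coeff p i else 0) = 0"
    by (auto simp: coeff_eq_0)
qed auto

lemma phi_0 [simp]: "phi n k (0::'a::comm_ring_1 poly) = 0"
  unfolding phi_def by (intro sum.neutral) simp

lemma phi_add: "phi n k (p + q) = phi n k p + phi n k q"
proof -
  define N where "N = Suc (degree p + degree q)"
  have "degree (p + q) < N" using degree_add_le_max[of p q] by (simp add: N_def)
  moreover have "degree p < N" "degree q < N" by (auto simp: N_def)
  ultimately show ?thesis
    by (auto simp: phi_bound[where N=N] sum.distrib[symmetric] intro!: sum.cong)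
qed

lemma phi_uminus: "phi n k (- p) = - phi n k p"
  by (auto simp: phi_def sum_negf[symmetric] intro!: sum.cong)

lemma phi_diff: "phi n k (p - q) = phi n k p - phi n k q"
  using phi_add[of n k p "-q"] by (simp add: phi_uminus)

lemma phi_smult: "phi n k (smult c p) = c * phi n k p"
proof (cases "c = 0")
  case True then show ?thesis by simp
next
  case False
  have "degree (smult c p) < Suc (degree p)" using degree_smult_le[of c p] by simp
  then have "phi n k (smult c p) = (\<Sum>j<Suc (degree p). if j mod n = k then coeff (smult c p) j else 0)"
    by (rule phi_bound)
  also have "\<dots> = c * (\<Sum>j<Suc (degree p). if j mod n = k then coeff p j else 0)"
    by (subst sum_distrib_left) (rule sum.cong, auto)
  also have "\<dots> = c * phi n k p" by (subst phi_bound[of p "Suc (degree p)"]) auto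
  finally show ?thesis .
qed

lemma phi_sum: "finite A \<Longrightarrow> phi n k (sum f A) = (\<Sum>x\<in>A. phi n k (f x))"
  by (induction A rule: finite_induct) (simp_all add: phi_add)

lemma phi_monom_shift: "phi n k (monom 1 n * q) = phi n k q"
proof -
  define N where "N = Suc (degree q)"
  have dq: "degree q < N" by (simp add: N_def)
  have "degree (monom 1 n * q) < N + n"
    using degree_mult_le[of "monom (1::'a) n" q] degree_monom_le[of "1::'a" n] dq by linarith
  then have "phi n k (monom 1 n * q) =
      (\<Sum>j<N+n. if j mod n = k then coeff (monom 1 n * q) j else 0)"
    by (rule phi_bound)
  also have "\<dots> = (\<Sum>j\<in>{..<n} \<union> {n..<N+n}. if j mod n = k then coeff (monom 1 n * q) j else 0)"
    by (rule sum.cong) auto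
  also have "\<dots> = (\<Sum>j\<in>{n..<N+n}. if j mod n = k then coeff (monom 1 n * q) j else 0)"
    by (subst sum.union_disjoint) (auto simp: coeff_monom_mult)
  also have "\<dots> = (\<Sum>j\<in>{0..<N}. if (j+n) mod n = k then coeff (monom 1 n * q) (j+n) else 0)"
    using sum.shift_bounds_nat_ivl[of "\<lambda>j. if j mod n = k then coeff (monom 1 n * q) j else 0" 0 n N]
    by simp
  also have "\<dots> = (\<Sum>j<N. if j mod n = k then coeff q j else 0)"
    by (rule sum.cong) (auto simp: coeff_monom_mult)
  also have "\<dots> = phi n k q" using phi_bound[OF dq] by simp
  finally show ?thesis .
qed

lemma phi_kill: "phi n k (q * (monom 1 n - 1)) = 0"
  by (simp add: right_diff_distrib phi_diff mult.commute[of q] phi_monom_shift)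

lemma phi_low:
  assumes "degree r < n" "k < n"
  shows "phi n k r = coeff r k"
proof -
  have "phi n k r = (\<Sum>j<n. if j mod n = k then coeff r j else 0)"
    by (rule phi_bound[OF assms(1)])
  also have "\<dots> = (\<Sum>j<n. if j = k then coeff r j else 0)"
    by (rule sum.cong) auto
  also have "\<dots> = coeff r k" using assms(2) by simp
  finally show ?thesis .
qed

lemma degree_Xn:
  assumes "n > 0"
  shows "degree (monom (1::'a::comm_ring_1) n - 1) = n"
proof (rule antisym)
  show "degree (monom (1::'a) n - 1) \<le> n"
    using degree_diff_le[of "monom (1::'a) n" n 1] degree_monom_le[of "1::'a" n] by simp
  show "n \<le> degree (monom (1::'a) n - 1)"
    by (rule le_degree) (use assms in \<open>simp add: coeff_monom\<close>)
qed

lemma coeff_Xn: "coeff (monom (1::'a::comm_ring_1) n - 1) j = (if j = n then 1 else 0) - (if j = 0 then 1 else 0)"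
  by (simp add: coeff_monom coeff_1)

lemma Xn_ne0: "n > 0 \<Longrightarrow> monom (1::'a::comm_ring_1) n - 1 \<noteq> 0"
  by (metis degree_Xn degree_0 less_irrefl)

lemma reflect_Xn:
  assumes "n > 0"
  shows "reflect_poly (monom (1::'a::{comm_ring_1}) n - 1) = - (monom 1 n - 1)"
  by (rule poly_eqI) (use assms in \<open>auto simp: coeff_reflect_poly degree_Xn coeff_Xn\<close>)

lemma phi_cy: "phi n k (cy B) = [:phi n k B:]"
  by (auto simp: phi_def const_sum intro!: sum.cong)

lemma all_phi_zero:
  fixes p :: "'a::field poly"
  assumes n: "n > 0" and z: "\<forall>k<n. phi n k p = 0"
  shows "(monom 1 n - 1) dvd p"
proof -
  let ?X = "monom 1 n - 1 :: 'a poly"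
  have dX: "degree ?X = n" by (rule degree_Xn[OF n])
  have X0: "?X \<noteq> 0" using Xn_ne0[OF n] .
  have peq: "p = (p div ?X) * ?X + p mod ?X" by (rule div_mult_mod_eq[symmetric])
  have phi_eq: "phi n k (p mod ?X) = phi n k p" for k
    by (subst (2) peq) (simp add: phi_add phi_kill)
  have "p mod ?X = 0"
  proof (rule ccontr)
    assume ne: "p mod ?X \<noteq> 0"
    have dl: "degree (p mod ?X) < n" using degree_mod_less'[OF X0 ne] dX by simp
    have "coeff (p mod ?X) k = 0" for k
    proof (cases "k < n")
      case True
      then show ?thesis using phi_low[OF dl True] phi_eq[of k] z by simp
    next
      case False
      then show ?thesis using dl by (simp add: coeff_eq_0)
    qed
    then have "p mod ?X = 0" by (simp add: poly_eq_iff)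
    with ne show False by simp
  qed
  then show ?thesis by (simp add: mod_eq_0_iff_dvd)
qed

lemma Psi_add: "map_poly (phi n k) (f + g) = map_poly (phi n k) f + map_poly (phi n k) g"
  by (rule poly_eqI) (simp add: coeff_map_poly phi_add)

lemma Psi_mult_cy: "map_poly (phi n k) (f * cy E) = map_poly (phi n k) f * E"
  by (rule poly_eqI) (simp add: coeff_map_poly coeff_mult phi_sum phi_smult, intro sum.cong refl, simp add: mult.commute)

lemma Psi_kill: "map_poly (phi n k) (smult (monom 1 n - 1) f) = 0"
  by (rule poly_eqI) (simp add: coeff_map_poly mult.commute[of "monom 1 n - 1"] phi_kill)

lemma Psi_smult: "map_poly (phi n k) (smult A (cy B)) = smult (phi n k A) B"
  by (rule poly_eqI) (simp add: coeff_map_poly phi_smult)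

lemma phi_smult_poly: "phi n k (smult c f) = c * phi n k f"
  by (rule phi_smult)

definition sl :: "nat \<Rightarrow> 'a::zero poly poly \<Rightarrow> 'a poly" where
  "sl a p = map_poly (\<lambda>c. coeff c a) p"

lemma coeff_sl: "coeff (sl a p) j = coeff (coeff p j) a"
  by (simp add: sl_def coeff_map_poly)

lemma deg_x_ge: "degree (coeff f j) \<le> deg_x f"
proof (cases "j \<le> degree f")
  case True
  then show ?thesis unfolding deg_x_def by (intro Max_ge) auto
next
  case False
  then show ?thesis by (simp add: coeff_eq_0)
qed

lemma deg_x_attained: "\<exists>j\<le>degree f. degree (coeff f j) = deg_x f"
proof -
  have "deg_x f \<in> (\<lambda>j. degree (coeff f j)) ` {..degree f}"
    unfolding deg_x_def by (intro Max_in) auto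
  then show ?thesis by auto
qed

lemma sl_nonzero:
  fixes f :: "'a::comm_ring_1 poly poly"
  assumes "f \<noteq> 0" shows "sl (deg_x f) f \<noteq> 0"
proof -
  obtain j where j: "degree (coeff f j) = deg_x f" using deg_x_attained by blast
  show ?thesis
  proof (cases "coeff f j = 0")
    case False
    then have "coeff (sl (deg_x f) f) j \<noteq> 0" by (simp add: coeff_sl j[symmetric])
    then show ?thesis by auto
  next
    case True
    then have dz: "deg_x f = 0" using j by simp
    have "degree (lead_coeff f) = 0" using deg_x_ge[of f "degree f"] dz by simp
    moreover have "lead_coeff f \<noteq> 0" using assms by simp
    ultimately have "coeff (lead_coeff f) 0 \<noteq> 0" using degree_0_id[of "lead_coeff f"] by force
    then have "coeff (sl (deg_x f) f) (degree f) \<noteq> 0" by (simp add: coeff_sl dz)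
    then show ?thesis by auto
  qed
qed

lemma coeff_mult_le_deg:
  fixes c d :: "'a::idom poly"
  assumes "degree c \<le> a" "degree d \<le> b"
  shows "coeff (c * d) (a + b) = coeff c a * coeff d b"
proof (cases "degree c = a \<and> degree d = b")
  case True
  then show ?thesis using coeff_mult_degree_sum[of c d] by simp
next
  case False
  then have lt: "degree c < a \<or> degree d < b" using assms by auto
  then have "degree (c * d) < a + b" using degree_mult_le[of c d] assms by linarith
  with lt show ?thesis by (auto simp: coeff_eq_0)
qed

lemma sl_mult:
  fixes p q :: "'a::idom poly poly"
  shows "sl (deg_x p + deg_x q) (p * q) = sl (deg_x p) p * sl (deg_x q) q"
  by (rule poly_eqI) (simp add: coeff_sl coeff_mult[of p q] coeff_mult[of "sl (deg_x p) p"] coeff_sum coeff_mult_le_deg deg_x_ge)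

lemma const_coeffs:
  fixes p q W :: "'a::idom poly poly"
  assumes "p * q = W" "\<forall>j. degree (coeff W j) = 0" "p \<noteq> 0" "q \<noteq> 0"
  shows "degree (coeff p j) = 0"
proof -
  have "deg_x p + deg_x q = 0"
  proof (rule ccontr)
    assume ne: "deg_x p + deg_x q \<noteq> 0"
    have "sl (deg_x p + deg_x q) W = 0"
      by (rule poly_eqI) (use ne assms(2) in \<open>auto simp: coeff_sl coeff_eq_0\<close>)
    moreover have "sl (deg_x p) p * sl (deg_x q) q \<noteq> 0"
      using sl_nonzero[OF assms(3)] sl_nonzero[OF assms(4)] by simp
    ultimately show False using sl_mult[of p q] assms(1) by simp
  qed
  then show ?thesis using deg_x_ge[of p j] by simp
qed

lemma sum_rev_delta:
  fixes N j :: nat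
  shows "(\<Sum>j'\<le>N. if N - j' = j then F j' else 0) = (if j \<le> N then F (N - j) else 0)"
proof (cases "j \<le> N")
  case True
  have "(\<Sum>j'\<le>N. if N - j' = j then F j' else 0) = (\<Sum>j'\<le>N. if j' = N - j then F j' else 0)"
  proof (rule sum.cong[OF refl])
    fix x assume "x \<in> {..N}"
    then have "(N - x = j) = (x = N - j)" using True by auto
    then show "(if N - x = j then F x else 0) = (if x = N - j then F x else 0)" by simp
  qed
  also have "\<dots> = F (N - j)" using True by (simp add: sum.delta)
  finally show ?thesis using True by simp
next
  case False
  have "(\<Sum>j'\<le>N. if N - j' = j then F j' else 0) = 0"
    by (rule sum.neutral) (use False in auto)
  then show ?thesis using False by simp
qed

lemma recip_alt: "recip f = (\<Sum>j'\<le>deg_y f. monom (\<Sum>i'\<le>deg_x f. monom (coeff (coeff f j') i') (deg_x f - i')) (deg_y f - j'))"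
  unfolding recip_def by (simp add: monom_sum)

lemma coeff_recip:
  "coeff (coeff (recip f) j) i = (if j \<le> deg_y f \<and> i \<le> deg_x f then coeff (coeff f (deg_y f - j)) (deg_x f - i) else 0)"
proof -
  have "coeff (recip f) j = (if j \<le> deg_y f then (\<Sum>i'\<le>deg_x f. monom (coeff (coeff f (deg_y f - j)) i') (deg_x f - i')) else 0)"
    unfolding recip_alt coeff_sum coeff_monom by (rule sum_rev_delta)
  then show ?thesis
    by (simp add: coeff_sum coeff_monom sum_rev_delta)
qed

lemma prod_coeff: "coeff (coeff (smult A (cy B)) j) i = coeff A i * coeff B j"
  by (simp add: mult.commute)

lemma prod_deg_y: "(A::'a::idom poly) \<noteq> 0 \<Longrightarrow> deg_y (smult A (cy B)) = degree B"
  by (simp add: deg_y_def)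

lemma prod_deg_x:
  fixes A B :: "'a::idom poly"
  assumes "A \<noteq> 0" "B \<noteq> 0"
  shows "deg_x (smult A (cy B)) = degree A"
  unfolding deg_x_def
proof (rule Max_eqI)
  show "finite ((\<lambda>j. degree (coeff (smult A (cy B)) j)) ` {..degree (smult A (cy B))})" by simp
  show "y \<le> degree A" if "y \<in> (\<lambda>j. degree (coeff (smult A (cy B)) j)) ` {..degree (smult A (cy B))}" for y
    using that degree_smult_le by (auto simp: mult.commute)
  have "degree (coeff (smult A (cy B)) (degree B)) = degree A"
    using assms by (simp add: mult.commute)
  then show "degree A \<in> (\<lambda>j. degree (coeff (smult A (cy B)) j)) ` {..degree (smult A (cy B))}"
    using assms by (auto intro!: image_eqI[where x="degree B"])
qed

lemma recip_prod:
  fixes A B :: "'a::{idom} poly"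
  assumes "A \<noteq> 0" "B \<noteq> 0"
  shows "recip (smult A (cy B)) = smult (reflect_poly A) (cy (reflect_poly B))"
proof (rule poly_eqI, rule poly_eqI)
  fix j i
  show "coeff (coeff (recip (smult A (cy B))) j) i = coeff (coeff (smult (reflect_poly A) (cy (reflect_poly B))) j) i"
    unfolding coeff_recip prod_coeff prod_deg_x[OF assms] prod_deg_y[OF assms(1)]
    by (auto simp: coeff_reflect_poly)
qed

lemma irr_factor:
  fixes X :: "'a::field poly"
  assumes "degree X > 0"
  shows "\<exists>p q. X = p * q \<and> irreducible p \<and> degree q < degree X"
  using assms
proof (induction "degree X" arbitrary: X rule: less_induct)
  case less
  have X0: "X \<noteq> 0" using less.prems by auto
  show ?case
  proof (cases "irreducible X")
    case True
    have "X = X * 1" by simp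
    moreover have "degree (1::'a poly) < degree X" using less.prems by simp
    ultimately show ?thesis using True by blast
  next
    case False
    have nu: "\<not> X dvd 1" using is_unit_iff_degree[OF X0] less.prems by simp
    from False X0 nu have "\<exists>a b. X = a * b \<and> \<not> a dvd 1 \<and> \<not> b dvd 1"
      unfolding irreducible_def by simp
    then obtain a b where ab: "X = a * b" "\<not> a dvd 1" "\<not> b dvd 1" by blast
    have a0: "a \<noteq> 0" "b \<noteq> 0" using ab(1) X0 by auto
    have da: "degree a > 0" using ab(2) is_unit_iff_degree[OF a0(1)] by simp
    have db: "degree b > 0" using ab(3) is_unit_iff_degree[OF a0(2)] by simp
    have dX: "degree X = degree a + degree b" using ab(1) a0 by (simp add: degree_mult_eq)
    have "degree a < degree X" using dX db by simp
    then obtain p q where pq: "a = p * q" "irreducible p" "degree q < degree a"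
      using less.hyps[of a] da by blast
    have q0: "q \<noteq> 0" using pq(1) a0(1) by auto
    have "degree (q * b) = degree q + degree b" using q0 a0(2) by (rule degree_mult_eq)
    then have "degree (q * b) < degree X" using pq(3) dX by simp
    moreover have "X = p * (q * b)" using pq(1) ab(1) by (simp only: mult.assoc)
    ultimately show ?thesis using pq(2) by blast
  qed
qed

lemma structure_lemma:
  fixes f k :: "'a::field poly poly"
  assumes "f * k = smult X (cy Y)" and "X \<noteq> 0" and "Y \<noteq> 0"
  shows "\<exists>A B. f = smult A (cy B) \<and> A \<noteq> 0 \<and> B \<noteq> 0"
  using assms
proof (induction "degree X" arbitrary: X f k rule: less_induct)
  case less
  have fk0: "f \<noteq> 0" "k \<noteq> 0" using less.prems by auto
  show ?case
  proof (cases "degree X = 0")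
    case True
    have dW: "\<forall>j. degree (coeff (smult X (cy Y)) j) = 0"
      using True by (simp add: mult.commute)
    have dj: "degree (coeff f j) = 0" for j
      by (rule const_coeffs[OF less.prems(1) dW fk0])
    define B where "B = map_poly (\<lambda>c. coeff c 0) f"
    have cyB: "cy B = f"
      by (rule poly_eqI) (simp add: B_def coeff_map_poly degree_0_id[OF dj])
    then have "f = smult 1 (cy B)" by simp
    moreover have "B \<noteq> 0" using cyB fk0 by auto
    ultimately show ?thesis by (intro exI[of _ 1] exI[of _ B]) simp
  next
    case False
    then obtain p X' where pq: "X = p * X'" "irreducible p" "degree X' < degree X"
      using irr_factor[of X] by auto
    have p0: "p \<noteq> 0" "X' \<noteq> 0" using pq less.prems(2) by auto
    have pr: "prime_elem [:p:]"
      by (rule lift_prime_elem_poly) (rule field_poly_irreducible_imp_prime[OF pq(2)])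
    have eq: "f * k = [:p:] * smult X' (cy Y)" using less.prems(1) pq(1) by (simp add: ac_simps)
    then have "[:p:] dvd f * k" by (metis dvd_triv_left)
    then have "[:p:] dvd f \<or> [:p:] dvd k" using pr by (simp add: prime_elem_dvd_mult_iff)
    then show ?thesis
    proof
      assume "[:p:] dvd f"
      then obtain f' where f': "f = [:p:] * f'" by (auto elim: dvdE)
      have "[:p:] * (f' * k) = [:p:] * smult X' (cy Y)" using eq f' by (simp add: mult.assoc)
      moreover have "[:p:] \<noteq> 0" using p0 by simp
      ultimately have "f' * k = smult X' (cy Y)" using mult_left_cancel by blast
      then obtain A B where AB: "f' = smult A (cy B)" "A \<noteq> 0" "B \<noteq> 0"
        using less.hyps[OF pq(3)] p0 less.prems(3) by blast
      have "f = smult (p * A) (cy B)" using f' AB by (simp add: mult.commute)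
      moreover have "p * A \<noteq> 0" using p0 AB by simp
      ultimately show ?thesis using AB by blast
    next
      assume "[:p:] dvd k"
      then obtain k' where k': "k = [:p:] * k'" by (auto elim: dvdE)
      have "[:p:] * (f * k') = [:p:] * smult X' (cy Y)" using eq k' by (simp add: ac_simps)
      moreover have "[:p:] \<noteq> 0" using p0 by simp
      ultimately have "f * k' = smult X' (cy Y)" using mult_left_cancel by blast
      then show ?thesis using less.hyps[OF pq(3)] p0 less.prems(3) by blast
    qed
  qed
qed

lemma x_pow: "[:0, 1::'a::comm_ring_1:] ^ n = monom 1 n"
  using monom_altdef[of "1::'a" n] by simp

lemma const_pow: "[:a::'a::comm_ring_1:] ^ n = [:a ^ n:]"
  by (induction n) (simp_all add: one_pCons)

lemma varX_eq: "(varX ^ l - 1 :: 'a::comm_ring_1 bipoly) = [:monom 1 l - 1:]"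
  by (simp add: varX_def const_pow x_pow one_pCons)

lemma cyXn: "cy (monom (1::'a::comm_ring_1) m - 1) = monom 1 m - 1"
  by (simp add: cy_diff cy_monom cy_1 one_pCons[symmetric])

lemma varY_eq: "(varY ^ m - 1 :: 'a::comm_ring_1 bipoly) = monom 1 m - 1"
  by (simp add: varY_def x_pow)

lemma smult_cy_mult: "smult A (cy B) * smult A' (cy B') = smult (A * A') (cy (B * B'))"
  by (simp add: cy_mult mult_ac)

lemma coeff_smult_cy: "coeff (smult U (cy V)) j = smult (coeff V j) U"
  by (simp add: mult.commute)

lemma smult_cancel_right:
  fixes U :: "'a::idom poly"
  assumes "smult a U = smult b U" "U \<noteq> 0"
  shows "a = b"
proof -
  have "coeff (smult a U) (degree U) = coeff (smult b U) (degree U)" using assms(1) by simp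
  then show ?thesis using assms(2) by simp
qed

lemma prod_eq_dvd:
  fixes U V X Y :: "'a::field poly"
  assumes eq: "smult U (cy V) = smult X (cy Y)" and U0: "U \<noteq> 0" and X0: "X \<noteq> 0"
    and Ym: "coeff Y m = 1"
  shows "U dvd X" "V dvd Y"
proof -
  have cj: "smult (coeff V j) U = smult (coeff Y j) X" for j
    using arg_cong[OF eq, of "\<lambda>p. coeff p j"] by (simp add: coeff_smult_cy)
  define c where "c = coeff V m"
  have cX: "smult c U = X" using cj[of m] Ym by (simp add: c_def)
  then have c0: "c \<noteq> 0" using X0 by auto
  have "X = U * [:c:]" using cX by simp
  then show "U dvd X" by (metis dvd_triv_left)
  have "coeff V j = coeff Y j * c" for j
  proof -
    have "smult (coeff V j) U = smult (coeff Y j * c) U" using cj[of j] cX by (simp add: smult_smult[symmetric])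
    then show ?thesis using U0 by (rule smult_cancel_right)
  qed
  then have "V = smult c Y" by (intro poly_eqI) (simp add: mult.commute)
  then have "Y = V * [:inverse c:]" using c0 by simp
  then show "V dvd Y" by (metis dvd_triv_left)
qed

lemma rel_ideal_add: "a \<in> rel_ideal l m \<Longrightarrow> b \<in> rel_ideal l m \<Longrightarrow> a + b \<in> rel_ideal l m"
proof -
  assume "a \<in> rel_ideal l m" "b \<in> rel_ideal l m"
  then obtain a1 a2 b1 b2 where ab: "a = a1 * (varX ^ l - 1) + a2 * (varY ^ m - 1)"
    "b = b1 * (varX ^ l - 1) + b2 * (varY ^ m - 1)" unfolding rel_ideal_def by blast
  have "a + b = (a1 + b1) * (varX ^ l - 1) + (a2 + b2) * (varY ^ m - 1)"
    unfolding ab by (simp only: distrib_right add_ac)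
  then show ?thesis unfolding rel_ideal_def by blast
qed

lemma rel_ideal_mult: "b \<in> rel_ideal l m \<Longrightarrow> c * b \<in> rel_ideal l m"
proof -
  assume "b \<in> rel_ideal l m"
  then obtain b1 b2 where bb: "b = b1 * (varX ^ l - 1) + b2 * (varY ^ m - 1)" unfolding rel_ideal_def by blast
  have "c * b = (c * b1) * (varX ^ l - 1) + (c * b2) * (varY ^ m - 1)"
    unfolding bb by (simp only: distrib_left mult.assoc)
  then show ?thesis unfolding rel_ideal_def by blast
qed

lemma rel_ideal_0: "0 \<in> rel_ideal l m"
proof -
  have "(0::'a::comm_ring_1 bipoly) = 0 * (varX ^ l - 1) + 0 * (varY ^ m - 1)" by simp
  then show ?thesis unfolding rel_ideal_def by blast
qed

lemma rel_ideal_uminus: "b \<in> rel_ideal l m \<Longrightarrow> - b \<in> rel_ideal l m"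
  using rel_ideal_mult[of b l m "-1"] by simp

lemma cls_sub:
  fixes f1 f2 :: "'a::comm_ring_1 bipoly"
  assumes "x \<in> cls l m f1" "f1 - f2 \<in> rel_ideal l m"
  shows "x \<in> cls l m f2"
proof -
  from assms(1) obtain k where k: "x = f1 + k" "k \<in> rel_ideal l m" unfolding cls_def by blast
  have "x = f2 + ((f1 - f2) + k)" using k by simp
  moreover have "(f1 - f2) + k \<in> rel_ideal l m" using assms(2) k(2) by (rule rel_ideal_add)
  ultimately show ?thesis unfolding cls_def by blast
qed

lemma cls_eqI:
  fixes f f' :: "'a::comm_ring_1 bipoly"
  assumes "f - f' \<in> rel_ideal l m"
  shows "cls l m f = cls l m f'"
proof -
  have "f' - f \<in> rel_ideal l m" using rel_ideal_uminus[OF assms] by simp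
  then show ?thesis using cls_sub[OF _ assms] cls_sub[of _ l m f' f] by blast
qed

lemma mem_cls_self: "f \<in> cls l m f"
  unfolding cls_def using rel_ideal_0 by force

lemma mem_cls: "x \<in> cls l m f \<Longrightarrow> x - f \<in> rel_ideal l m"
  unfolding cls_def by auto

theorem mainTheorem5:
  fixes g h :: "'a::{finite, field} bipoly" and l m :: nat
  assumes "g \<noteq> 0" and "h \<noteq> 0"
    and "(varX ^ l - 1) * (varY ^ m - 1) = g * h"
    and "gen_ideal_R l m g \<noteq> {cls l m 0}"
    and "gen_ideal_R l m (recip h) \<noteq> {cls l m 0}"
  shows "gen_ideal_R l m g \<subseteq> gen_ideal_R l m (recip h)
     \<longleftrightarrow> (varX ^ l - 1) * (varY ^ m - 1) dvd g * recip g"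
proof -
  define X :: "'a poly" where "X = monom 1 l - 1"
  define Y :: "'a poly" where "Y = monom 1 m - 1"
  have PX: "varX ^ l - 1 = [:X:]" by (simp add: X_def varX_eq)
  have PY: "varY ^ m - 1 = cy Y" by (simp add: Y_def varY_eq cyXn)
  have P: "(varX ^ l - 1) * (varY ^ m - 1) = smult X (cy Y)" by (simp add: PX PY)
  have gh: "g * h = smult X (cy Y)" using assms(3) P by simp
  have gh0: "g * h \<noteq> 0" using assms(1,2) by simp
  have l0: "l > 0"
  proof (rule ccontr)
    assume "\<not> l > 0" then have "X = 0" by (simp add: X_def)
    then show False using gh gh0 by simp
  qed
  have m0: "m > 0"
  proof (rule ccontr)
    assume "\<not> m > 0" then have "Y = 0" by (simp add: Y_def)
    then show False using gh gh0 by simp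
  qed
  have X0: "X \<noteq> 0" using Xn_ne0[OF l0] by (simp add: X_def)
  have Y0: "Y \<noteq> 0" using Xn_ne0[OF m0] by (simp add: Y_def)
  obtain A B where gAB: "g = smult A (cy B)" "A \<noteq> 0" "B \<noteq> 0"
    using structure_lemma[OF gh X0 Y0] by blast
  have hg: "h * g = smult X (cy Y)" using gh by (simp add: mult.commute)
  obtain A' B' where hAB: "h = smult A' (cy B')" "A' \<noteq> 0" "B' \<noteq> 0"
    using structure_lemma[OF hg X0 Y0] by blast
  define D where "D = reflect_poly A'"
  define E where "E = reflect_poly B'"
  have rg: "recip g = smult (reflect_poly A) (cy (reflect_poly B))"
    using gAB by (simp add: recip_prod)
  have rh: "recip h = smult D (cy E)"
    using hAB by (simp add: recip_prod D_def E_def)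
  have ghp: "g * h = smult (A * A') (cy (B * B'))" unfolding gAB(1) hAB(1) by (rule smult_cy_mult)
  have rgrh: "recip g * recip h = smult X (cy Y)"
  proof -
    have "recip g * recip h = smult (reflect_poly (A * A')) (cy (reflect_poly (B * B')))"
      unfolding rg rh D_def E_def smult_cy_mult reflect_poly_mult ..
    also have "\<dots> = recip (smult (A * A') (cy (B * B')))"
      using gAB hAB by (simp add: recip_prod)
    also have "\<dots> = recip (smult X (cy Y))" using ghp gh by simp
    also have "\<dots> = smult (reflect_poly X) (cy (reflect_poly Y))" using X0 Y0 by (simp add: recip_prod)
    also have "\<dots> = smult X (cy Y)"
      unfolding X_def Y_def reflect_Xn[OF l0] reflect_Xn[OF m0] cy_uminus by (simp, metis minus_diff_eq smult_minus_left)
    finally show ?thesis .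
  qed
  have coeffY: "coeff Y m = 1" using m0 by (simp add: Y_def coeff_Xn)
  have eq2: "smult (reflect_poly A * D) (cy (reflect_poly B * E)) = smult X (cy Y)"
    using rgrh unfolding rg rh smult_cy_mult .
  have U0: "reflect_poly A * D \<noteq> 0" using gAB hAB by (simp add: D_def)
  have DX: "D dvd X" using prod_eq_dvd(1)[OF eq2 U0 X0 coeffY] by (metis dvd_mult_right)
  have EY: "E dvd Y" using prod_eq_dvd(2)[OF eq2 U0 X0 coeffY] by (metis dvd_mult_right)
  have rg0: "recip g \<noteq> 0" unfolding rg using gAB(2,3) by simp
  have notI: "\<not> (\<exists>a b. g = a * [:X:] + b * cy Y)"
  proof
    assume "\<exists>a b. g = a * [:X:] + b * cy Y"
    then have gI: "g \<in> rel_ideal l m" unfolding rel_ideal_def PX PY by blast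
    have "gen_ideal_R l m g = {cls l m 0}"
    proof
      show "gen_ideal_R l m g \<subseteq> {cls l m 0}"
      proof
        fix x assume "x \<in> gen_ideal_R l m g"
        then obtain c where c: "x = cls l m (c * g)" unfolding gen_ideal_R_def by blast
        have "c * g - 0 \<in> rel_ideal l m" using rel_ideal_mult[OF gI, of c] by simp
        then show "x \<in> {cls l m 0}" using c cls_eqI by blast
      qed
      have "cls l m 0 = cls l m (0 * g)" by simp
      then show "{cls l m 0} \<subseteq> gen_ideal_R l m g"
        unfolding gen_ideal_R_def by blast
    qed
    with assms(4) show False by contradiction
  qed
  show ?thesis
  proof
    assume inc: "gen_ideal_R l m g \<subseteq> gen_ideal_R l m (recip h)"
    have "cls l m (1 * g) \<in> gen_ideal_R l m g" unfolding gen_ideal_R_def by blast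
    then obtain a where "cls l m (1 * g) = cls l m (a * recip h)"
      using inc unfolding gen_ideal_R_def by blast
    then have "g \<in> cls l m (a * recip h)" using mem_cls_self[of g l m] by simp
    then have "g - a * recip h \<in> rel_ideal l m" by (rule mem_cls)
    then obtain u v where uv: "g - a * recip h = u * [:X:] + v * cy Y"
      unfolding rel_ideal_def PX PY by blast
    then have geq: "g = a * recip h + u * [:X:] + v * cy Y" by (simp add: algebra_simps)
    have ah: "a * recip h = smult D a * cy E" by (simp add: rh)
    have ux: "u * [:X:] = smult X u" by simp
    have geq2: "g = smult D a * cy E + smult X u + v * cy Y" using geq ah ux by simp
    have DA: "D dvd A"
    proof (cases "\<exists>k<m. phi m k B \<noteq> 0")
      case True
      then obtain k where k: "k < m" "phi m k B \<noteq> 0" by blast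
      have "A * [:phi m k B:] = phi m k g" unfolding gAB(1) phi_smult phi_cy ..
      also have "\<dots> = phi m k (smult D a * cy E) + phi m k (smult X u) + phi m k (v * cy Y)"
        by (subst geq2) (simp only: phi_add)
      also have "phi m k (smult D a * cy E) = D * phi m k (a * cy E)"
        by (simp only: mult_smult_left phi_smult)
      also have "phi m k (smult X u) = X * phi m k u" by (rule phi_smult)
      also have "phi m k (v * cy Y) = 0" unfolding Y_def cyXn by (rule phi_kill)
      finally have eqA: "A * [:phi m k B:] = D * phi m k (a * cy E) + X * phi m k u" by simp
      have "D dvd D * phi m k (a * cy E) + X * phi m k u"
        using DX by (intro dvd_add dvd_triv_left dvd_mult2)
      then have "D dvd A * [:phi m k B:]" by (simp only: eqA)
      then have "D dvd A * [:phi m k B:] * [:inverse (phi m k B):]" by (rule dvd_mult2)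
      moreover have "A * [:phi m k B:] * [:inverse (phi m k B):] = A"
        using k(2) by (simp add: mult.assoc)
      ultimately show ?thesis by simp
    next
      case False
      then have "Y dvd B" using all_phi_zero[OF m0, of B] by (simp add: Y_def)
      then obtain B2 where B2: "B = Y * B2" by (auto elim: dvdE)
      have "g = 0 * [:X:] + smult A (cy B2) * cy Y"
        unfolding gAB(1) B2 cy_mult by (simp add: mult.commute)
      then show ?thesis using notI by blast
    qed
    have EB: "E dvd B"
    proof (cases "\<exists>k<l. phi l k A \<noteq> 0")
      case True
      then obtain k where k: "k < l" "phi l k A \<noteq> 0" by blast
      have "smult (phi l k A) B = map_poly (phi l k) g" unfolding gAB(1) Psi_smult ..
      also have "\<dots> = map_poly (phi l k) (smult D a * cy E) + map_poly (phi l k) (smult X u)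
           + map_poly (phi l k) (v * cy Y)"
        by (subst geq2) (simp only: Psi_add)
      also have "map_poly (phi l k) (smult D a * cy E) = map_poly (phi l k) (smult D a) * E"
        by (rule Psi_mult_cy)
      also have "map_poly (phi l k) (smult X u) = 0" unfolding X_def by (rule Psi_kill)
      also have "map_poly (phi l k) (v * cy Y) = map_poly (phi l k) v * Y" by (rule Psi_mult_cy)
      finally have eqB: "smult (phi l k A) B = map_poly (phi l k) (smult D a) * E + map_poly (phi l k) v * Y"
        by simp
      have "E dvd map_poly (phi l k) (smult D a) * E + map_poly (phi l k) v * Y"
        using EY by (intro dvd_add dvd_triv_right dvd_mult)
      then have "E dvd smult (phi l k A) B" by (simp only: eqB)
      then have "E dvd smult (inverse (phi l k A)) (smult (phi l k A) B)" by (rule dvd_smult)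
      then show ?thesis using k(2) by simp
    next
      case False
      then have "X dvd A" using all_phi_zero[OF l0, of A] by (simp add: X_def)
      then obtain A2 where A2: "A = X * A2" by (auto elim: dvdE)
      have "g = smult A2 (cy B) * [:X:] + 0 * cy Y"
        unfolding gAB(1) A2 by (simp add: mult.commute)
      then show ?thesis using notI by blast
    qed
    from DA EB obtain A1 B1 where AB1: "A = D * A1" "B = E * B1" by (auto elim!: dvdE)
    have "g = recip h * smult A1 (cy B1)" unfolding gAB(1) AB1 rh smult_cy_mult ..
    then have "g * recip g = (recip g * recip h) * smult A1 (cy B1)" by (simp only: mult_ac)
    then show "(varX ^ l - 1) * (varY ^ m - 1) dvd g * recip g"
      unfolding P rgrh[symmetric] by (rule dvdI)
  next
    assume dv: "(varX ^ l - 1) * (varY ^ m - 1) dvd g * recip g"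
    then have "recip g * recip h dvd g * recip g" unfolding P rgrh[symmetric] .
    then have "recip g * recip h dvd recip g * g" by (simp only: mult.commute[of g "recip g"])
    then have "recip g = 0 \<or> recip h dvd g" by (simp only: dvd_mult_cancel_left)
    with rg0 have "recip h dvd g" by blast
    then obtain w where w: "g = recip h * w" by (auto elim: dvdE)
    show "gen_ideal_R l m g \<subseteq> gen_ideal_R l m (recip h)"
    proof
      fix x assume "x \<in> gen_ideal_R l m g"
      then obtain c where "x = cls l m (c * g)" unfolding gen_ideal_R_def by blast
      moreover have "c * g = (c * w) * recip h"
        unfolding w mult.assoc mult.commute[of "recip h" w] ..
      ultimately have "x = cls l m ((c * w) * recip h)" by simp
      then show "x \<in> gen_ideal_R l m (recip h)" unfolding gen_ideal_R_def by blast
    qed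
  qed
qed

end
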